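(* Let $N\ge1$ and assume $f\in C^{N+1}[a,b]$ with $\|f^{(N+1)}\|_{L^\infty(a,b)}\le C_f$; let $h_I=\max_k(a_k-a_{k-1})$. For each $k=1,\dots,K$ let $p_k=L_Ng_k$. Then there exists $\mathbf c_k^{\mathrm{int}}\in\mathbb C^{N+1}$ with $p_k=\mathcal L_N^{(T)}(\mathbf c_k^{\mathrm{int}})$, and \[ \|g_k-Q_{N,\epsilon}^{(T)}g_k\|_{L^2(\Lambda)}\le \|g_k-p_k\|_{L^2(\Lambda)}+\epsilon\|\mathbf c_k^{\mathrm{int}}\|_2\le \sqrt2\,\frac{h_I^{\,N+1}}{N^{\,N+1}}C_f+\epsilon\|\mathbf c_k^{\mathrm{int}}\|_2 . \] Consequently, \[ \|f-\mathcal P_{N,K}^{T,\epsilon}f\|_{L^2(I)}^2\le\sum_{k=1}^K s_k\Big(\sqrt2\,\frac{h_I^{\,N+1}}{N^{\,N+1}}C_f+\epsilon\|\mathbf c_k^{\mathrm{int}}\|_2\Big)^2 . \]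
   Context: $I=[a,b]$ with partition $a=a_0<\cdots<a_K=b$, $I_k=[a_{k-1},a_k]$, $c_k=\frac{a_{k-1}+a_k}{2}$, $s_k=\frac{a_k-a_{k-1}}{2}$, $\Lambda=[-1,1]$, $g_k(t)=f(c_k+s_kt)$ for $t\in\Lambda$. $L_Ng_k$ denotes the polynomial of degree at most $N$ interpolating $g_k$ at the equispaced nodes $t_j=-1+2j/N$, $j=0,\dots,N$. Fix $T>1$ and $\epsilon>0$. With $\{p_\ell\}$ the $L^2([-1,1])$-orthonormal Legendre polynomials, $P_\ell^{(T)}(t)=T^{-1/2}p_\ell(t/T)$, the synthesis operator is $\mathcal L_N^{(T)}:\mathbb C^{N+1}\to L^2(\Lambda)$, $\mathcal L_N^{(T)}(\mathbf c)=\sum_{\ell=0}^Nc_\ell P_\ell^{(T)}|_\Lambda$, with SVD $\mathcal L_N^{(T)}\mathbf c=\sum_j\sigma_j(v_j^*\mathbf c)u_j$ ($\sigma_j>0$, $\{v_j\}$ orthonormal in $\mathbb C^{N+1}$, $\{u_j\}$ orthonormal in $L^2(\Lambda)$). The TSVD operator is $Q_{N,\epsilon}^{(T)}g=\sum_{j:\sigma_j>\epsilon}\sigma_j^{-1}\langle g,u_j\rangle\,\mathcal L_N^{(T)}(v_j)$, and $(\mathcal P_{N,K}^{T,\epsilon}f)(x)=(Q_{N,\epsilon}^{(T)}g_k)\big(\frac{x-c_k}{s_k}\big)$ for $x\in I_k$. *)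

theory Defs
  imports "HOL-Analysis.Analysis"
begin

fun legendre :: "nat \<Rightarrow> real \<Rightarrow> real" where
  "legendre 0 x = 1"
| "legendre (Suc 0) x = x"
| "legendre (Suc (Suc n)) x =
     ((2 * real n + 3) * x * legendre (Suc n) x - (real n + 1) * legendre n x) / (real n + 2)"

text \<open>L2([-1,1])-orthonormal Legendre polynomials p_l.\<close>
definition legendre_on :: "nat \<Rightarrow> real \<Rightarrow> real" where
  "legendre_on l x = sqrt ((2 * real l + 1) / 2) * legendre l x"

definition legendre_T :: "real \<Rightarrow> nat \<Rightarrow> real \<Rightarrow> real" where
  "legendre_T T l t = legendre_on l (t / T) / sqrt T"

text \<open>Synthesis operator: coefficient vectors in C^(N+1) are represented as
  functions nat => complex, only indices 0..N being used.\<close>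
definition synth :: "nat \<Rightarrow> real \<Rightarrow> (nat \<Rightarrow> complex) \<Rightarrow> real \<Rightarrow> complex" where
  "synth N T c t = (\<Sum>l\<le>N. c l * complex_of_real (legendre_T T l t))"

definition vinner :: "nat \<Rightarrow> (nat \<Rightarrow> complex) \<Rightarrow> (nat \<Rightarrow> complex) \<Rightarrow> complex" where
  "vinner N x y = (\<Sum>l\<le>N. x l * cnj (y l))"

definition vnorm :: "nat \<Rightarrow> (nat \<Rightarrow> complex) \<Rightarrow> real" where
  "vnorm N x = sqrt (\<Sum>l\<le>N. (cmod (x l))\<^sup>2)"

text \<open>Inner product and norm of L2(Lambda), Lambda = [-1,1].\<close>
definition l2_inner :: "(real \<Rightarrow> complex) \<Rightarrow> (real \<Rightarrow> complex) \<Rightarrow> complex" where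
  "l2_inner g h = integral {-1..1} (\<lambda>t. g t * cnj (h t))"

definition l2_norm :: "(real \<Rightarrow> complex) \<Rightarrow> real" where
  "l2_norm g = sqrt (integral {-1..1} (\<lambda>t. (cmod (g t))\<^sup>2))"

definition is_svd :: "nat \<Rightarrow> real \<Rightarrow> nat \<Rightarrow> (nat \<Rightarrow> real) \<Rightarrow> (nat \<Rightarrow> nat \<Rightarrow> complex)
    \<Rightarrow> (nat \<Rightarrow> real \<Rightarrow> complex) \<Rightarrow> bool" where
  "is_svd N T r \<sigma> v u \<longleftrightarrow>
     (\<forall>j<r. \<sigma> j > 0) \<and>
     (\<forall>i<r. \<forall>j<r. vinner N (v i) (v j) = (if i = j then 1 else 0)) \<and>
     (\<forall>i<r. \<forall>j<r. l2_inner (u i) (u j) = (if i = j then 1 else 0)) \<and>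
     (\<forall>c. \<forall>t\<in>{-1..1}.
        synth N T c t = (\<Sum>j<r. complex_of_real (\<sigma> j) * vinner N c (v j) * u j t))"

definition tsvd :: "nat \<Rightarrow> real \<Rightarrow> real \<Rightarrow> nat \<Rightarrow> (nat \<Rightarrow> real) \<Rightarrow> (nat \<Rightarrow> nat \<Rightarrow> complex)
    \<Rightarrow> (nat \<Rightarrow> real \<Rightarrow> complex) \<Rightarrow> (real \<Rightarrow> complex) \<Rightarrow> real \<Rightarrow> complex" where
  "tsvd N T eps r \<sigma> v u g t =
     (\<Sum>j\<in>{j. j < r \<and> \<sigma> j > eps}.
        complex_of_real (1 / \<sigma> j) * l2_inner g (u j) * synth N T (v j) t)"

definition node :: "nat \<Rightarrow> nat \<Rightarrow> real" where
  "node N j = -1 + 2 * real j / real N"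

definition interp :: "nat \<Rightarrow> (real \<Rightarrow> complex) \<Rightarrow> real \<Rightarrow> complex" where
  "interp N g t = (\<Sum>j\<le>N. g (node N j) *
      complex_of_real (\<Prod>i\<in>{..N} - {j}. (t - node N i) / (node N j - node N i)))"

definition mid :: "(nat \<Rightarrow> real) \<Rightarrow> nat \<Rightarrow> real" where
  "mid a k = (a (k - 1) + a k) / 2"

definition half :: "(nat \<Rightarrow> real) \<Rightarrow> nat \<Rightarrow> real" where
  "half a k = (a k - a (k - 1)) / 2"

definition loc :: "(real \<Rightarrow> complex) \<Rightarrow> (nat \<Rightarrow> real) \<Rightarrow> nat \<Rightarrow> real \<Rightarrow> complex" where
  "loc f a k t = f (mid a k + half a k * t)"

text \<open>Piecewise approximation P_{N,K}^{T,eps} f; on a shared breakpoint the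
  left subinterval is used (a null set, irrelevant for the L2 norm).\<close>
definition piecewise_approx :: "nat \<Rightarrow> real \<Rightarrow> real \<Rightarrow> nat \<Rightarrow> (nat \<Rightarrow> real)
    \<Rightarrow> (nat \<Rightarrow> nat \<Rightarrow> complex) \<Rightarrow> (nat \<Rightarrow> real \<Rightarrow> complex) \<Rightarrow> (real \<Rightarrow> complex)
    \<Rightarrow> (nat \<Rightarrow> real) \<Rightarrow> real \<Rightarrow> complex" where
  "piecewise_approx N T eps r \<sigma> v u f a x =
     (let k = (LEAST k. 1 \<le> k \<and> x \<le> a k)
      in tsvd N T eps r \<sigma> v u (loc f a k) ((x - mid a k) / half a k))"

end

theory Submission
  imports Defs "HOL-Computational_Algebra.Polynomial"
begin



fun lp :: "nat \<Rightarrow> real poly" where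
  "lp 0 = 1"
| "lp (Suc 0) = [:0, 1:]"
| "lp (Suc (Suc n)) = smult (1 / (real n + 2))
     (smult (2 * real n + 3) ([:0, 1:] * lp (Suc n)) - smult (real n + 1) (lp n))"

lemma poly_lp: "poly (lp n) x = legendre n x"
  by (induction n rule: lp.induct) (simp_all add: field_simps)

lemma lp_deg: "degree (lp n) \<le> n \<and> coeff (lp n) n > 0"
proof (induction n rule: lp.induct)
  case 1 then show ?case by simp
next
  case 2 then show ?case by simp
next
  case (3 n)
  have d1: "degree ([:0, 1:] * lp (Suc n)) \<le> Suc (Suc n)"
    using degree_mult_le[of "[:0, 1:]" "lp (Suc n)"] "3.IH" by (auto simp del: mult_pCons_left)
  show ?case
  proof
    show "degree (lp (Suc (Suc n))) \<le> Suc (Suc n)"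
      using 3 d1
      by (simp del: mult_pCons_left) (intro degree_smult_le[THEN order.trans] degree_diff_le; auto intro: order.trans[OF degree_smult_le])
    have c0: "coeff (lp n) (Suc (Suc n)) = 0" using 3 by (simp add: coeff_eq_0)
    have "coeff ([:0, 1:] * lp (Suc n)) (Suc (Suc n)) = coeff (lp (Suc n)) (Suc n)"
      by simp
    then show "coeff (lp (Suc (Suc n))) (Suc (Suc n)) > 0"
      using 3 c0 by (simp del: mult_pCons_left add: field_simps) (auto intro!: add_pos_nonneg mult_nonneg_nonneg)
  qed
qed

lemma lp_span:
  fixes N :: nat
  shows "\<And>q::real poly. degree q \<le> m \<Longrightarrow> m \<le> N \<Longrightarrow>
     \<exists>c::nat \<Rightarrow> real. \<forall>x. poly q x = (\<Sum>l\<le>N. c l * poly (lp l) x)"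
proof (induction m)
  case 0
  then obtain a where q: "q = [:a:]" using degree0_coeffs by auto
  show ?case
  proof (rule exI[of _ "\<lambda>l. if l = 0 then a else 0"], intro allI)
    fix x
    have h: "\<And>l. (if l = (0::nat) then a else 0) * poly (lp l) x = (if l = 0 then a * poly (lp l) x else 0)" by simp
    show "poly q x = (\<Sum>l\<le>N. (if l = 0 then a else 0) * poly (lp l) x)"
      unfolding h by (simp add: q)
  qed
next
  case (Suc m)
  define \<alpha> where "\<alpha> = coeff q (Suc m) / coeff (lp (Suc m)) (Suc m)"
  define q' where "q' = q - smult \<alpha> (lp (Suc m))"
  have pos: "coeff (lp (Suc m)) (Suc m) > 0" using lp_deg by blast
  have "degree q' \<le> m"
  proof (rule degree_le, intro allI impI)
    fix i assume "m < i"
    show "coeff q' i = 0"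
    proof (cases "i = Suc m")
      case True then show ?thesis using pos by (simp add: q'_def \<alpha>_def)
    next
      case False
      then have "i > Suc m" using \<open>m < i\<close> by simp
      then have "coeff q i = 0" "coeff (lp (Suc m)) i = 0"
        using Suc.prems lp_deg[of "Suc m"] by (auto intro: coeff_eq_0)
      then show ?thesis by (simp add: q'_def)
    qed
  qed
  then obtain c where c: "\<forall>x. poly q' x = (\<Sum>l\<le>N. c l * poly (lp l) x)"
    using Suc by auto
  show ?case
  proof (rule exI[of _ "\<lambda>l. c l + (if l = Suc m then \<alpha> else 0)"], intro allI)
    fix x
    have "poly q x = poly q' x + \<alpha> * poly (lp (Suc m)) x" by (simp add: q'_def)
    also have "\<dots> = (\<Sum>l\<le>N. c l * poly (lp l) x) + (\<Sum>l\<le>N. (if l = Suc m then \<alpha> else 0) * poly (lp l) x)"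
    proof -
      have h: "\<And>l. (if l = Suc m then \<alpha> else 0) * poly (lp l) x = (if l = Suc m then \<alpha> * poly (lp l) x else 0)" by simp
      show ?thesis unfolding h using Suc.prems by (simp add: c)
    qed
    also have "\<dots> = (\<Sum>l\<le>N. (c l + (if l = Suc m then \<alpha> else 0)) * poly (lp l) x)"
      by (simp add: sum.distrib distrib_right)
    finally show "poly q x = (\<Sum>l\<le>N. (c l + (if l = Suc m then \<alpha> else 0)) * poly (lp l) x)" .
  qed
qed

lemma legT_span:
  fixes T :: real and Q :: "real poly"
  assumes T: "T > 0" and dQ: "degree Q \<le> N"
  shows "\<exists>c::nat \<Rightarrow> real. \<forall>t. poly Q t = (\<Sum>l\<le>N. c l * legendre_T T l t)"
proof -
  define q where "q = pcompose Q [:0, T:]"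
  have "degree q \<le> N" using dQ T by (simp add: q_def degree_pcompose)
  then obtain c where c: "\<forall>x. poly q x = (\<Sum>l\<le>N. c l * poly (lp l) x)"
    using lp_span by blast
  show ?thesis
  proof (rule exI[of _ "\<lambda>l. c l * sqrt T / sqrt ((2 * real l + 1) / 2)"], intro allI)
    fix t
    have "poly Q t = poly q (t / T)" using T by (simp add: q_def poly_pcompose)
    also have "\<dots> = (\<Sum>l\<le>N. c l * poly (lp l) (t / T))" by (simp add: c)
    also have "\<dots> = (\<Sum>l\<le>N. c l * sqrt T / sqrt ((2 * real l + 1) / 2) * legendre_T T l t)"
    proof (rule sum.cong[OF refl])
      fix l
      have "sqrt ((2 * real l + 1) / 2) > 0" by simp
      then show "c l * poly (lp l) (t / T) = c l * sqrt T / sqrt ((2 * real l + 1) / 2) * legendre_T T l t"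
        using T by (simp add: legendre_T_def legendre_on_def poly_lp field_simps)
    qed
    finally show "poly Q t = (\<Sum>l\<le>N. c l * sqrt T / sqrt ((2 * real l + 1) / 2) * legendre_T T l t)" .
  qed
qed

lemma synth_span:
  fixes T :: real and Q :: "nat \<Rightarrow> real poly" and z :: "nat \<Rightarrow> complex"
  assumes T: "T > 0" and dQ: "\<And>j. j \<le> M \<Longrightarrow> degree (Q j) \<le> N"
  shows "\<exists>c. \<forall>t. (\<Sum>j\<le>M. z j * complex_of_real (poly (Q j) t)) = synth N T c t"
proof -
  have "\<forall>j\<in>{..M}. \<exists>c::nat \<Rightarrow> real. \<forall>t. poly (Q j) t = (\<Sum>l\<le>N. c l * legendre_T T l t)"
    using legT_span[OF T] dQ by blast
  then obtain C where C: "\<And>j t. j \<in> {..M} \<Longrightarrow> poly (Q j) t = (\<Sum>l\<le>N. C j l * legendre_T T l t)"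
    by metis
  show ?thesis
  proof (rule exI[of _ "\<lambda>l. \<Sum>j\<le>M. z j * complex_of_real (C j l)"], intro allI)
    fix t
    have "(\<Sum>j\<le>M. z j * complex_of_real (poly (Q j) t))
        = (\<Sum>j\<le>M. \<Sum>l\<le>N. z j * complex_of_real (C j l) * complex_of_real (legendre_T T l t))"
      by (rule sum.cong[OF refl]) (simp add: C sum_distrib_left mult.assoc)
    also have "\<dots> = synth N T (\<lambda>l. \<Sum>j\<le>M. z j * complex_of_real (C j l)) t"
      unfolding synth_def by (subst sum.swap) (simp add: sum_distrib_right)
    finally show "(\<Sum>j\<le>M. z j * complex_of_real (poly (Q j) t)) = synth N T (\<lambda>l. \<Sum>j\<le>M. z j * complex_of_real (C j l)) t" .
  qed
qed

definition lagr :: "nat \<Rightarrow> nat \<Rightarrow> real poly" where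
  "lagr N j = (\<Prod>i\<in>{..N} - {j}. smult (1 / (node N j - node N i)) [:- node N i, 1:])"

lemma poly_lagr: "poly (lagr N j) t = (\<Prod>i\<in>{..N} - {j}. (t - node N i) / (node N j - node N i))"
  unfolding lagr_def poly_prod by (simp add: diff_divide_distrib)

lemma degree_lagr: "j \<le> N \<Longrightarrow> degree (lagr N j) \<le> N"
proof -
  assume "j \<le> N"
  have "degree (lagr N j) \<le> (\<Sum>i\<in>{..N} - {j}. degree (smult (1 / (node N j - node N i)) [:- node N i, 1:]))"
    unfolding lagr_def using degree_prod_sum_le[of "{..N} - {j}" "\<lambda>i. smult (1 / (node N j - node N i)) [:- node N i, 1:]"]
    by (simp only: o_def finite_Diff finite_atMost simp_thms)
  also have "\<dots> \<le> (\<Sum>i\<in>{..N} - {j}. 1)"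
    by (rule sum_mono) (simp add: degree_smult_le order.trans[OF degree_smult_le])
  also have "\<dots> \<le> N" using \<open>j \<le> N\<close> by (auto simp: card_Diff_singleton)
  finally show ?thesis .
qed

lemma interp_lagr: "interp N g t = (\<Sum>j\<le>N. g (node N j) * complex_of_real (poly (lagr N j) t))"
  by (simp add: interp_def poly_lagr)

lemma interp_synth:
  assumes "T > 0"
  shows "\<exists>c. \<forall>t. interp N g t = synth N T c t"
  unfolding interp_lagr by (rule synth_span[OF assms degree_lagr])



lemma zmono_lt: "(\<forall>i<n. z i < z (Suc i)) \<Longrightarrow> i < j \<Longrightarrow> j \<le> n \<Longrightarrow> (z i :: real) < z j"
proof (induction j)
  case 0 then show ?case by simp
next
  case (Suc j)
  then show ?case by (cases "i = j") (auto intro: less_trans)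
qed

lemma zmono_le: "(\<forall>i<n. z i < z (Suc i)) \<Longrightarrow> i \<le> j \<Longrightarrow> j \<le> n \<Longrightarrow> (z i :: real) \<le> z j"
  using zmono_lt[of n z i j] by (cases "i = j") auto

lemma rolle_real:
  fixes f f' :: "real \<Rightarrow> real"
  assumes "a < b" "f a = 0" "f b = 0" "continuous_on {a..b} f"
    "\<And>x. a < x \<Longrightarrow> x < b \<Longrightarrow> (f has_real_derivative f' x) (at x)"
  shows "\<exists>x. a < x \<and> x < b \<and> f' x = 0"
proof -
  have "\<exists>x. a < x \<and> x < b \<and> (\<lambda>x. (*) (f' x)) x = (\<lambda>v. 0)"
    using assms by (intro Rolle_deriv[of a b f "\<lambda>x. (*) (f' x)"]) (auto simp: has_field_derivative_def)
  then obtain x where x: "a < x" "x < b" "(*) (f' x) = (\<lambda>v. 0)" by blast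
  from fun_cong[OF x(3), of 1] have "f' x = 0" by simp
  then show ?thesis using x by auto
qed

lemma rolle_chain:
  fixes F :: "nat \<Rightarrow> real \<Rightarrow> real"
  shows "\<And>F z. (\<forall>i<n. z i < z (Suc i)) \<Longrightarrow> (\<forall>i\<le>n. F 0 (z i) = 0) \<Longrightarrow>
    (\<forall>m<n. continuous_on {z 0..z n} (F m)) \<Longrightarrow>
    (\<forall>m<n. \<forall>x. z 0 < x \<and> x < z n \<longrightarrow> (F m has_real_derivative F (Suc m) x) (at x)) \<Longrightarrow>
    \<exists>\<xi>. z 0 \<le> \<xi> \<and> \<xi> \<le> z n \<and> (0 < n \<longrightarrow> z 0 < \<xi> \<and> \<xi> < z n) \<and> F n \<xi> = 0"
proof (induction n)
  case 0
  then show ?case by auto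
next
  case (Suc n)
  note zs = Suc.prems(1)
  have sub: "{z i..z (Suc i)} \<subseteq> {z 0..z (Suc n)}" if "i \<le> n" for i
    using zmono_le[OF zs, of 0 i] zmono_le[OF zs, of "Suc i" "Suc n"] that by auto
  have "\<forall>i\<in>{..n}. \<exists>x. z i < x \<and> x < z (Suc i) \<and> F 1 x = 0"
  proof
    fix i assume i: "i \<in> {..n}"
    show "\<exists>x. z i < x \<and> x < z (Suc i) \<and> F 1 x = 0"
    proof (rule rolle_real)
      show "z i < z (Suc i)" using zs i by auto
      show "F 0 (z i) = 0" "F 0 (z (Suc i)) = 0" using Suc.prems(2) i by auto
      show "continuous_on {z i..z (Suc i)} (F 0)"
        using Suc.prems(3) sub[of i] i by (auto intro: continuous_on_subset)
      fix x assume "z i < x" "x < z (Suc i)"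
      moreover have "z 0 \<le> z i" "z (Suc i) \<le> z (Suc n)"
        using zmono_le[OF zs, of 0 i] zmono_le[OF zs, of "Suc i" "Suc n"] i by auto
      ultimately show "(F 0 has_real_derivative F 1 x) (at x)"
        using Suc.prems(4) by auto
    qed
  qed
  then obtain w where w: "\<And>i. i \<in> {..n} \<Longrightarrow> z i < w i \<and> w i < z (Suc i) \<and> F 1 (w i) = 0"
    by metis
  have ws: "\<forall>i<n. w i < w (Suc i)"
  proof (intro allI impI)
    fix i assume "i < n"
    then show "w i < w (Suc i)" using w[of i] w[of "Suc i"] by auto
  qed
  have w0: "z 0 < w 0" and wn: "w n < z (Suc n)" using w[of 0] w[of n] by auto
  have wsub: "{w 0..w n} \<subseteq> {z 0..z (Suc n)}" using w0 wn by auto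
  obtain \<xi> where xi: "w 0 \<le> \<xi>" "\<xi> \<le> w n" "F (Suc n) \<xi> = 0"
  proof -
    have "\<exists>\<xi>. w 0 \<le> \<xi> \<and> \<xi> \<le> w n \<and> (0 < n \<longrightarrow> w 0 < \<xi> \<and> \<xi> < w n) \<and> (\<lambda>m. F (Suc m)) n \<xi> = 0"
    proof (rule Suc.IH[of w "\<lambda>m. F (Suc m)"])
      show "\<forall>i<n. w i < w (Suc i)" by (rule ws)
      show "\<forall>i\<le>n. F (Suc 0) (w i) = 0" using w by auto
      show "\<forall>m<n. continuous_on {w 0..w n} (F (Suc m))"
      proof (intro allI impI)
        fix m assume "m < n"
        then have "continuous_on {z 0..z (Suc n)} (F (Suc m))" using Suc.prems(3) by simp
        then show "continuous_on {w 0..w n} (F (Suc m))" using wsub by (rule continuous_on_subset)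
      qed
      show "\<forall>m<n. \<forall>x. w 0 < x \<and> x < w n \<longrightarrow> (F (Suc m) has_real_derivative F (Suc (Suc m)) x) (at x)"
        using Suc.prems(4) w0 wn by auto
    qed
    then show ?thesis using that by auto
  qed
  then show ?case using w0 wn by (intro exI[of _ \<xi>]) auto
qed

lemma coeff_pderiv_pow:
  "coeff ((pderiv ^^ m) p) i = pochhammer (of_nat (Suc i)) m * coeff (p :: real poly) (i + m)"
proof (induction m arbitrary: i)
  case 0 then show ?case by simp
next
  case (Suc m)
  show ?case by (simp add: coeff_pderiv Suc pochhammer_rec algebra_simps)
qed

lemma pderiv_pow_zero: "degree (p :: real poly) < m \<Longrightarrow> (pderiv ^^ m) p = 0"
  by (rule poly_eqI) (simp add: coeff_pderiv_pow coeff_eq_0)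

lemma pderiv_pow_top: assumes "degree (p :: real poly) = m" "coeff p m = 1"
  shows "(pderiv ^^ m) p = [:fact m:]"
proof (rule poly_eqI)
  fix i
  show "coeff ((pderiv ^^ m) p) i = coeff [:fact m:] i"
  proof (cases i)
    case 0 then show ?thesis using assms by (simp add: coeff_pderiv_pow pochhammer_fact)
  next
    case (Suc k)
    then have "coeff p (i + m) = 0" using assms by (intro coeff_eq_0) simp
    then show ?thesis using Suc by (simp add: coeff_pderiv_pow)
  qed
qed

lemma prod_dist_bound:
  fixes x :: real
  shows "0 \<le> x \<Longrightarrow> x \<le> real n \<Longrightarrow> (\<Prod>j\<le>n. \<bar>x - real j\<bar>) \<le> fact (Suc n)"
proof (induction n arbitrary: x)
  case 0 then show ?case by simp
next
  case (Suc n)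
  show ?case
  proof (cases "x \<le> real n")
    case True
    have "(\<Prod>j\<le>Suc n. \<bar>x - real j\<bar>) = (\<Prod>j\<le>n. \<bar>x - real j\<bar>) * \<bar>x - real (Suc n)\<bar>" by simp
    also have "\<dots> \<le> fact (Suc n) * (real n + 2)"
      using Suc.IH[OF Suc.prems(1) True] Suc.prems True
      by (intro mult_mono) (auto simp: prod_nonneg)
    also have "\<dots> = fact (Suc (Suc n))" by (simp add: algebra_simps)
    finally show ?thesis .
  next
    case False
    show ?thesis
    proof (cases "1 \<le> x")
    case True
    have "(\<Prod>j\<le>Suc n. \<bar>x - real j\<bar>) = \<bar>x - real 0\<bar> * (\<Prod>j\<le>n. \<bar>x - real (Suc j)\<bar>)"
      by (rule prod.atMost_Suc_shift)
    also have "(\<Prod>j\<le>n. \<bar>x - real (Suc j)\<bar>) = (\<Prod>j\<le>n. \<bar>(x - 1) - real j\<bar>)" by (simp add: algebra_simps)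
    also have "\<dots> \<le> fact (Suc n)" using Suc.prems True by (intro Suc.IH) auto
    finally have "(\<Prod>j\<le>Suc n. \<bar>x - real j\<bar>) \<le> \<bar>x\<bar> * fact (Suc n)"
      by (simp add: mult_left_mono)
    also have "\<dots> \<le> (real n + 2) * fact (Suc n)"
      using Suc.prems by (intro mult_right_mono) auto
    also have "\<dots> = fact (Suc (Suc n))" by (simp add: algebra_simps)
    finally show ?thesis .
    next
      case False
      then have n0: "n = 0" using \<open>\<not> x \<le> real n\<close> by simp
      have "\<bar>x\<bar> * \<bar>x - 1\<bar> \<le> 1 * 1" using Suc.prems False by (intro mult_mono) auto
      then show ?thesis using n0 by simp
    qed
  qed
qed


lemma node_strict: "N \<ge> 1 \<Longrightarrow> i < j \<Longrightarrow> node N i < node N j"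
  by (simp add: node_def divide_strict_right_mono)

lemma node_inj: "N \<ge> 1 \<Longrightarrow> node N i = node N j \<Longrightarrow> i = j"
  by (metis linorder_neqE_nat node_strict order_less_irrefl)

lemma poly_lagr_node: assumes "N \<ge> 1" "i \<le> N"
  shows "poly (lagr N j) (node N i) = (if i = j then 1 else 0)"
proof (cases "i = j")
  case True
  then show ?thesis using assms node_inj[OF assms(1)]
    by (simp add: poly_lagr) (rule prod.neutral, auto)
next
  case False
  then have "i \<in> {..N} - {j}" using assms by auto
  then show ?thesis using False by (simp add: poly_lagr prod_zero_iff) blast
qed

lemma interp_node: assumes "N \<ge> 1" "i \<le> N"
  shows "interp N g (node N i) = g (node N i)"
proof -
  have "interp N g (node N i) = (\<Sum>j\<le>N. if j = i then g (node N j) else 0)"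
    unfolding interp_lagr by (rule sum.cong[OF refl]) (auto simp: poly_lagr_node[OF assms])
  also have "\<dots> = g (node N i)" using assms by (simp add: sum.delta')
  finally show ?thesis .
qed

definition omega :: "nat \<Rightarrow> real poly" where
  "omega N = (\<Prod>j\<le>N. [:- node N j, 1:])"

lemma poly_omega: "poly (omega N) x = (\<Prod>j\<le>N. x - node N j)"
  by (simp add: omega_def poly_prod)

lemma omega_deg: "degree (omega N) = Suc N \<and> coeff (omega N) (Suc N) = 1"
proof -
  have d: "degree (omega N) = Suc N"
    unfolding omega_def by (subst degree_prod_eq_sum_degree) auto
  have "lead_coeff (omega N) = 1" unfolding omega_def lead_coeff_prod by simp
  then show ?thesis using d by simp
qed

lemma omega_bound: assumes N: "N \<ge> 1" and t: "t \<in> {-1..1}"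
  shows "\<bar>poly (omega N) t\<bar> \<le> (2 / real N) ^ Suc N * fact (Suc N)"
proof -
  define y where "y = (t + 1) * real N / 2"
  have y: "0 \<le> y" "y \<le> real N" using t N by (auto simp: y_def)
  have "poly (omega N) t = (\<Prod>j\<le>N. (2 / real N) * (y - real j))"
    unfolding poly_omega using N by (intro prod.cong refl) (simp add: node_def y_def field_simps)
  also have "\<dots> = (2 / real N) ^ Suc N * (\<Prod>j\<le>N. y - real j)"
    by (simp only: prod.distrib prod_constant card_atMost)
  finally have "\<bar>poly (omega N) t\<bar> = (2 / real N) ^ Suc N * (\<Prod>j\<le>N. \<bar>y - real j\<bar>)"
    by (simp add: abs_mult abs_prod)
  also have "\<dots> \<le> (2 / real N) ^ Suc N * fact (Suc N)"
    using prod_dist_bound[OF y] by (intro mult_left_mono) auto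
  finally show ?thesis .
qed

lemma interp_err:
  fixes G :: "nat \<Rightarrow> real \<Rightarrow> complex" and N :: nat and M t :: real
  assumes N: "N \<ge> 1"
    and der: "\<And>m x. m \<le> N \<Longrightarrow> x \<in> {-1..1} \<Longrightarrow> (G m has_vector_derivative G (Suc m) x) (at x within {-1..1})"
    and bnd: "\<And>x. x \<in> {-1<..<1} \<Longrightarrow> cmod (G (Suc N) x) \<le> M"
    and t: "t \<in> {-1..1}"
  shows "cmod (G 0 t - interp N (G 0) t) \<le> (2 / real N) ^ Suc N * M"
proof -
  have "cmod (G (Suc N) 0) \<le> M" by (rule bnd) simp
  then have M0: "M \<ge> 0" using norm_ge_zero[of "G (Suc N) 0"] by linarith
  have R0: "(2 / real N) ^ Suc N * M \<ge> 0" using M0 by simp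
  define e where "e = G 0 t - interp N (G 0) t"
  show ?thesis
  proof (cases "e = 0 \<or> (\<exists>i\<le>N. t = node N i)")
    case True
    then have "e = 0" using interp_node[OF N] by (auto simp: e_def)
    then show ?thesis using R0 by (simp add: e_def)
  next
    case False
    then have e0: "e \<noteq> 0" and tn: "\<And>i. i \<le> N \<Longrightarrow> t \<noteq> node N i" by auto
    define w where "w = cnj e / complex_of_real (cmod e)"
    have we: "w * e = complex_of_real (cmod e)"
    proof -
      have "w * e = (e * cnj e) / complex_of_real (cmod e)" by (simp add: w_def mult.commute)
      also have "e * cnj e = complex_of_real ((cmod e)\<^sup>2)" by (rule complex_norm_square[symmetric])
      finally show ?thesis using e0 by (simp add: power2_eq_square)
    qed
    have cw: "cmod w = 1" using e0 by (simp add: w_def norm_divide)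
    define P where "P = (\<Sum>j\<le>N. smult (Re (w * G 0 (node N j))) (lagr N j))"
    have degP: "degree P < Suc N"
      unfolding P_def using degree_lagr
      by (intro le_imp_less_Suc degree_sum_le) (auto intro: order.trans[OF degree_smult_le])
    have polyP: "poly P x = Re (w * interp N (G 0) x)" for x
      unfolding P_def interp_lagr poly_sum sum_distrib_left Re_sum
      by (intro sum.cong refl) (simp add: mult.assoc[symmetric] del: mult.assoc)
    define wt where "wt = poly (omega N) t"
    have wt0: "wt \<noteq> 0" using tn by (auto simp: wt_def poly_omega prod_zero_iff)
    define K where "K = cmod e / wt"
    define F where "F m x = Re (w * G m x) - poly ((pderiv ^^ m) P) x - K * poly ((pderiv ^^ m) (omega N)) x" for m x
    have F0: "F 0 x = Re (w * (G 0 x - interp N (G 0) x)) - K * poly (omega N) x" for x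
      by (simp add: F_def polyP algebra_simps)
    define i0 where "i0 = nat \<lfloor>(t + 1) * real N / 2\<rfloor>"
    have fl: "real i0 \<le> (t + 1) * real N / 2" "(t + 1) * real N / 2 < real i0 + 1"
      using t by (auto simp: i0_def) linarith+
    have Nne: "node N N = 1" "node N 0 = -1" using N by (auto simp: node_def)
    have "t \<noteq> 1" using tn[of N] Nne by auto
    then have "t < 1" using t by auto
    then have "t * real N < 1 * real N" using N by (intro mult_strict_right_mono) auto
    then have "real i0 < real N" using fl by (simp add: field_simps)
    then have i0N: "i0 < N" by simp
    have "node N i0 \<le> t" using fl N by (simp add: node_def field_simps)
    then have lo: "node N i0 < t" using tn[of i0] i0N by fastforce
    have hi: "t < node N (Suc i0)" using fl N by (simp add: node_def field_simps)
    define z where "z m = (if m \<le> i0 then node N m else if m = Suc i0 then t else node N (m - 1))" for m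
    have zs: "\<forall>i<Suc N. z i < z (Suc i)"
    proof (intro allI impI)
      fix i assume "i < Suc N"
      consider "i < i0" | "i = i0" | "i = Suc i0" | "i > Suc i0" by linarith
      then show "z i < z (Suc i)"
      proof cases
        case 1 then show ?thesis using N by (simp add: z_def node_strict)
      next
        case 2 then show ?thesis using lo by (simp add: z_def)
      next
        case 3 then show ?thesis using hi by (simp add: z_def)
      next
        case 4 then show ?thesis using N by (simp add: z_def node_strict)
      qed
    qed
    have z0: "z 0 = -1" and zN: "z (Suc N) = 1" using Nne i0N by (auto simp: z_def)
    have zz: "\<forall>i\<le>Suc N. F 0 (z i) = 0"
    proof (intro allI impI)
      fix i assume i: "i \<le> Suc N"
      show "F 0 (z i) = 0"
      proof (cases "i = Suc i0")
        case True
        have "F 0 t = Re (w * e) - cmod e" using wt0 by (simp add: F0 e_def K_def wt_def)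
        then show ?thesis using True we by (simp add: z_def)
      next
        case False
        have "\<exists>j. j \<le> N \<and> z i = node N j"
        proof (cases "i \<le> i0")
          case True then show ?thesis using i0N by (intro exI[of _ i]) (simp add: z_def)
        next
          case F2: False then show ?thesis using False i by (intro exI[of _ "i - 1"]) (simp add: z_def)
        qed
        then obtain j where j: "j \<le> N" "z i = node N j" by blast
        have "poly (omega N) (node N j) = 0" using j(1) by (auto simp: poly_omega prod_zero_iff)
        then show ?thesis using j by (simp add: F0 interp_node[OF N])
      qed
    qed
    have Gc: "continuous_on {-1..1} (G m)" if "m \<le> N" for m
      using der[OF that] by (rule continuous_on_vector_derivative)
    have Fc: "\<forall>m<Suc N. continuous_on {z 0..z (Suc N)} (F m)"
      unfolding z0 zN F_def using Gc by (auto intro!: continuous_intros)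
    have Fd: "\<forall>m<Suc N. \<forall>x. z 0 < x \<and> x < z (Suc N) \<longrightarrow> (F m has_real_derivative F (Suc m) x) (at x)"
    proof (intro allI impI)
      fix m x assume m: "m < Suc N" and x: "z 0 < x \<and> x < z (Suc N)"
      then have xi: "x \<in> interior {-1..1::real}" using z0 zN by auto
      have "(G m has_vector_derivative G (Suc m) x) (at x)"
        using der[of m x] m xi at_within_interior[OF xi] interior_subset by fastforce
      then have "((\<lambda>x. Re (w * G m x)) has_real_derivative Re (w * G (Suc m) x)) (at x)"
        by (intro has_field_derivative_Re has_vector_derivative_mult_right)
      then have D: "(F m has_real_derivative (Re (w * G (Suc m) x) - poly (pderiv ((pderiv^^m) P)) x
          - K * poly (pderiv ((pderiv^^m) (omega N))) x)) (at x)"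
        unfolding F_def[abs_def] by (intro DERIV_diff DERIV_cmult poly_DERIV)
      have Fs: "F (Suc m) x = Re (w * G (Suc m) x) - poly (pderiv ((pderiv^^m) P)) x
          - K * poly (pderiv ((pderiv^^m) (omega N))) x" by (simp add: F_def)
      show "(F m has_real_derivative F (Suc m) x) (at x)" unfolding Fs by (rule D)
    qed
    obtain \<xi> where xi: "-1 < \<xi>" "\<xi> < 1" "F (Suc N) \<xi> = 0"
      using rolle_chain[OF zs zz Fc Fd] z0 zN by auto
    have "F (Suc N) \<xi> = Re (w * G (Suc N) \<xi>) - K * fact (Suc N)"
    proof -
      have p1: "(pderiv^^Suc N) P = 0" by (rule pderiv_pow_zero[OF degP])
      have p2: "(pderiv^^Suc N) (omega N) = [:fact (Suc N):]" using omega_deg[of N] by (intro pderiv_pow_top) auto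
      show ?thesis unfolding F_def p1 p2 by simp
    qed
    then have KF: "K * fact (Suc N) = Re (w * G (Suc N) \<xi>)" using xi by simp
    have "\<bar>Re (w * G (Suc N) \<xi>)\<bar> \<le> M"
      using abs_Re_le_cmod[of "w * G (Suc N) \<xi>"] bnd[of \<xi>] xi cw by (auto simp: norm_mult)
    then have Kb: "\<bar>K\<bar> * fact (Suc N) \<le> M" using KF by (simp add: abs_mult)
    have "cmod e = K * wt" using wt0 by (simp add: K_def)
    then have "cmod e = \<bar>K\<bar> * \<bar>wt\<bar>" by (metis abs_mult abs_norm_cancel)
    also have "\<dots> \<le> \<bar>K\<bar> * ((2 / real N) ^ Suc N * fact (Suc N))"
      unfolding wt_def by (intro mult_left_mono omega_bound[OF N t]) auto
    also have "\<dots> = (2 / real N) ^ Suc N * (\<bar>K\<bar> * fact (Suc N))" by simp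
    also have "\<dots> \<le> (2 / real N) ^ Suc N * M" using Kb by (intro mult_left_mono) auto
    finally show ?thesis by (simp add: e_def)
  qed
qed



lemma Re_mult_ofr1: "Re (w * complex_of_real b) = Re w * b" by simp
lemma Re_mult_ofr2: "Re (complex_of_real b * w) = b * Re w" by simp

locale sesq =
  fixes V :: "('a \<Rightarrow> complex) set" and ip :: "('a \<Rightarrow> complex) \<Rightarrow> ('a \<Rightarrow> complex) \<Rightarrow> complex"
  assumes V_add: "x \<in> V \<Longrightarrow> y \<in> V \<Longrightarrow> (\<lambda>t. x t + y t) \<in> V"
    and V_scale: "x \<in> V \<Longrightarrow> (\<lambda>t. c * x t) \<in> V"
    and V_zero: "(\<lambda>t. 0) \<in> V"
    and ip_add: "x \<in> V \<Longrightarrow> y \<in> V \<Longrightarrow> z \<in> V \<Longrightarrow> ip (\<lambda>t. x t + y t) z = ip x z + ip y z"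
    and ip_scale: "x \<in> V \<Longrightarrow> z \<in> V \<Longrightarrow> ip (\<lambda>t. c * x t) z = c * ip x z"
    and ip_cnj: "x \<in> V \<Longrightarrow> y \<in> V \<Longrightarrow> ip y x = cnj (ip x y)"
    and ip_pos: "x \<in> V \<Longrightarrow> Re (ip x x) \<ge> 0"
begin

definition nrm where "nrm x = sqrt (Re (ip x x))"

lemma V_diff: "x \<in> V \<Longrightarrow> y \<in> V \<Longrightarrow> (\<lambda>t. x t - y t) \<in> V"
proof -
  assume "x \<in> V" "y \<in> V"
  then have "(\<lambda>t. x t + (-1) * y t) \<in> V" by (intro V_add V_scale)
  then show ?thesis by simp
qed

lemma ip_diff: "x \<in> V \<Longrightarrow> y \<in> V \<Longrightarrow> z \<in> V \<Longrightarrow> ip (\<lambda>t. x t - y t) z = ip x z - ip y z"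
proof -
  assume V: "x \<in> V" "y \<in> V" "z \<in> V"
  have "ip (\<lambda>t. x t + (-1) * y t) z = ip x z + ip (\<lambda>t. (-1) * y t) z"
    using V by (intro ip_add V_scale)
  also have "ip (\<lambda>t. (-1) * y t) z = (-1) * ip y z" using V by (intro ip_scale)
  finally have "ip (\<lambda>t. x t + (-1) * y t) z = ip x z - ip y z" by simp
  moreover have "(\<lambda>t. x t + (-1) * y t) = (\<lambda>t. x t - y t)" by simp
  ultimately show ?thesis by simp
qed

lemma V_sum: "finite S \<Longrightarrow> (\<And>j. j \<in> S \<Longrightarrow> e j \<in> V) \<Longrightarrow> (\<lambda>t. \<Sum>j\<in>S. c j * e j t) \<in> V"
proof (induction S rule: finite_induct)
  case empty then show ?case using V_zero by simp
next
  case (insert a F)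
  then have "(\<lambda>t. c a * e a t + (\<Sum>j\<in>F. c j * e j t)) \<in> V" by (intro V_add V_scale) auto
  then show ?case using insert by simp
qed

lemma ip_sum_left: "finite S \<Longrightarrow> (\<And>j. j \<in> S \<Longrightarrow> e j \<in> V) \<Longrightarrow> z \<in> V \<Longrightarrow>
   ip (\<lambda>t. \<Sum>j\<in>S. c j * e j t) z = (\<Sum>j\<in>S. c j * ip (e j) z)"
proof (induction S rule: finite_induct)
  case empty
  have "ip (\<lambda>t. 0 * (0::complex)) z = 0 * ip (\<lambda>t. 0) z" using V_zero empty by (intro ip_scale)
  then show ?case by simp
next
  case (insert a F)
  have "ip (\<lambda>t. c a * e a t + (\<Sum>j\<in>F. c j * e j t)) z = ip (\<lambda>t. c a * e a t) z + ip (\<lambda>t. \<Sum>j\<in>F. c j * e j t) z"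
    using insert by (intro ip_add V_scale V_sum) auto
  then show ?case using insert by (simp add: ip_scale)
qed

lemma ip_sum_right: "finite S \<Longrightarrow> (\<And>j. j \<in> S \<Longrightarrow> e j \<in> V) \<Longrightarrow> z \<in> V \<Longrightarrow>
   ip z (\<lambda>t. \<Sum>j\<in>S. c j * e j t) = (\<Sum>j\<in>S. cnj (c j) * ip z (e j))"
  by (subst ip_cnj[of "\<lambda>t. \<Sum>j\<in>S. c j * e j t" z]) (auto intro: V_sum simp: ip_sum_left ip_cnj[of z])

lemma ip_scale_right: "x \<in> V \<Longrightarrow> z \<in> V \<Longrightarrow> ip z (\<lambda>t. c * x t) = cnj c * ip z x"
  by (subst ip_cnj[of "\<lambda>t. c * x t" z]) (auto intro: V_scale simp: ip_scale ip_cnj[of z])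

lemma ip_diff_right: "x \<in> V \<Longrightarrow> y \<in> V \<Longrightarrow> z \<in> V \<Longrightarrow> ip z (\<lambda>t. x t - y t) = ip z x - ip z y"
  by (subst ip_cnj[of "\<lambda>t. x t - y t" z]) (auto intro: V_diff simp: ip_diff ip_cnj[of z])

lemma ip_add_right: "x \<in> V \<Longrightarrow> y \<in> V \<Longrightarrow> z \<in> V \<Longrightarrow> ip z (\<lambda>t. x t + y t) = ip z x + ip z y"
  by (subst ip_cnj[of "\<lambda>t. x t + y t" z]) (auto intro: V_add simp: ip_add ip_cnj[of z])

lemma ip_self_real: "x \<in> V \<Longrightarrow> ip x x = complex_of_real (Re (ip x x))"
proof -
  assume x: "x \<in> V"
  have h: "ip x x = cnj (ip x x)" using x x by (rule ip_cnj)
  have "Im (ip x x) = Im (cnj (ip x x))" using h by (rule arg_cong)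
  then have "Im (ip x x) = 0" by simp
  then show ?thesis by (simp add: complex_eq_iff)
qed

lemma nrm_nonneg: "x \<in> V \<Longrightarrow> nrm x \<ge> 0" by (simp add: nrm_def ip_pos)

lemma nrm_sq: "x \<in> V \<Longrightarrow> (nrm x)\<^sup>2 = Re (ip x x)"
proof -
  assume "x \<in> V"
  then have "Re (ip x x) \<ge> 0" by (rule ip_pos)
  then show ?thesis by (simp add: nrm_def)
qed

lemma cauchy_schwarz: assumes x: "x \<in> V" and y: "y \<in> V"
  shows "cmod (ip x y) \<le> nrm x * nrm y"
proof -
  define A where "A = Re (ip x x)"
  define B where "B = Re (ip y y)"
  define z where "z = ip x y"
  have A0: "A \<ge> 0" "B \<ge> 0" using ip_pos x y by (auto simp: A_def B_def)
  have key: "A - 2 * r * (cmod z)\<^sup>2 + r\<^sup>2 * (cmod z)\<^sup>2 * B \<ge> 0" for r :: real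
  proof -
    define l where "l = complex_of_real r * z"
    have Vl: "(\<lambda>t. l * y t) \<in> V" using y by (rule V_scale)
    have Vd: "(\<lambda>t. x t - l * y t) \<in> V" using x Vl by (rule V_diff)
    have e1: "ip (\<lambda>t. x t - l * y t) (\<lambda>t. x t - l * y t) = ip x (\<lambda>t. x t - l * y t) - ip (\<lambda>t. l * y t) (\<lambda>t. x t - l * y t)"
      using x Vl Vd by (rule ip_diff)
    have e2: "ip x (\<lambda>t. x t - l * y t) = ip x x - ip x (\<lambda>t. l * y t)" using x Vl x by (rule ip_diff_right)
    have e3: "ip (\<lambda>t. l * y t) (\<lambda>t. x t - l * y t) = ip (\<lambda>t. l * y t) x - ip (\<lambda>t. l * y t) (\<lambda>t. l * y t)"
      using x Vl Vl by (rule ip_diff_right)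
    have e4: "ip x (\<lambda>t. l * y t) = cnj l * ip x y" using y x by (rule ip_scale_right)
    have e5: "ip (\<lambda>t. l * y t) x = l * ip y x" using y x by (rule ip_scale)
    have e6: "ip (\<lambda>t. l * y t) (\<lambda>t. l * y t) = l * ip y (\<lambda>t. l * y t)" using y Vl by (rule ip_scale)
    have e7: "ip y (\<lambda>t. l * y t) = cnj l * ip y y" using y y by (rule ip_scale_right)
    have "ip (\<lambda>t. x t - l * y t) (\<lambda>t. x t - l * y t)
        = ip x x - cnj l * ip x y - l * ip y x + l * cnj l * ip y y"
      unfolding e1 e2 e3 e4 e5 e6 e7 by (simp add: algebra_simps)
    moreover have "Re (ip (\<lambda>t. x t - l * y t) (\<lambda>t. x t - l * y t)) \<ge> 0"
      using Vd by (rule ip_pos)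
    moreover have "ip y x = cnj z" using ip_cnj[OF x y] by (simp add: z_def)
    moreover have "ip y y = complex_of_real B" using ip_self_real[OF y] by (simp add: B_def)
    ultimately have "0 \<le> Re (ip x x - cnj l * z - l * cnj z + l * cnj l * complex_of_real B)"
      by (simp only: z_def)
    then have "0 \<le> A - Re (cnj l * z) - Re (l * cnj z) + Re (l * cnj l) * B"
      by (simp only: A_def minus_complex.sel plus_complex.sel Re_mult_ofr1)
    moreover have "Re (cnj z * z) = (cmod z)\<^sup>2" by (subst cmod_power2) (simp add: power2_eq_square)
    moreover have "cnj l * z = complex_of_real r * (cnj z * z)" by (simp add: l_def)
    moreover have "l * cnj z = complex_of_real r * (cnj z * z)" by (simp add: l_def)
    moreover have "l * cnj l = complex_of_real (r\<^sup>2) * (cnj z * z)" by (simp add: l_def power2_eq_square)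
    ultimately show ?thesis by (simp only: Re_mult_ofr2)
  qed
  have sq: "(cmod z)\<^sup>2 \<le> A * B"
  proof (cases "B > 0")
    case True
    have "A - 2 * (1/B) * (cmod z)\<^sup>2 + (1/B)\<^sup>2 * (cmod z)\<^sup>2 * B \<ge> 0" by (rule key)
    then have "A - (cmod z)\<^sup>2 / B \<ge> 0" using True by (simp add: power2_eq_square field_simps)
    then show ?thesis using True by (simp add: field_simps)
  next
    case False
    then have B: "B = 0" using A0 by simp
    show ?thesis
    proof (rule ccontr)
      assume "\<not> ?thesis"
      then have zp: "(cmod z)\<^sup>2 > 0" using B by simp
      have "A - 2 * ((A + 1) / (2 * (cmod z)\<^sup>2)) * (cmod z)\<^sup>2 + ((A + 1) / (2 * (cmod z)\<^sup>2))\<^sup>2 * (cmod z)\<^sup>2 * B \<ge> 0"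
        by (rule key)
      then show False using zp B by (simp add: field_simps)
    qed
  qed
  have "cmod z = sqrt ((cmod z)\<^sup>2)" by simp
  also have "\<dots> \<le> sqrt (A * B)" using sq by (rule real_sqrt_le_mono)
  also have "\<dots> = nrm x * nrm y" by (simp add: nrm_def A_def B_def real_sqrt_mult)
  finally show ?thesis by (simp add: z_def)
qed

lemma nrm_triangle: assumes x: "x \<in> V" and y: "y \<in> V"
  shows "nrm (\<lambda>t. x t + y t) \<le> nrm x + nrm y"
proof -
  have Vs: "(\<lambda>t. x t + y t) \<in> V" using x y by (rule V_add)
  have "ip (\<lambda>t. x t + y t) (\<lambda>t. x t + y t) = ip x (\<lambda>t. x t + y t) + ip y (\<lambda>t. x t + y t)"
    using x y Vs by (rule ip_add)
  also have "\<dots> = (ip x x + ip x y) + (ip y x + ip y y)"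
    by (simp only: ip_add_right[OF x y x] ip_add_right[OF x y y])
  finally have e: "ip (\<lambda>t. x t + y t) (\<lambda>t. x t + y t) = (ip x x + ip x y) + (ip y x + ip y y)" .
  have yx: "Re (ip y x) = Re (ip x y)" using ip_cnj[OF x y] by simp
  have "Re (ip x y) \<le> nrm x * nrm y" using cauchy_schwarz[OF x y] complex_Re_le_cmod order.trans by blast
  moreover have "(nrm (\<lambda>t. x t + y t))\<^sup>2 = Re (ip x x) + 2 * Re (ip x y) + Re (ip y y)"
    using nrm_sq[OF Vs] e yx by simp
  moreover have "(nrm x + nrm y)\<^sup>2 = Re (ip x x) + 2 * (nrm x * nrm y) + Re (ip y y)"
    using nrm_sq[OF x] nrm_sq[OF y] by (simp add: power2_sum)
  ultimately have "(nrm (\<lambda>t. x t + y t))\<^sup>2 \<le> (nrm x + nrm y)\<^sup>2" by linarith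
  then show ?thesis using nrm_nonneg x y by (meson add_nonneg_nonneg power2_le_imp_le)
qed

definition orthon :: "'b set \<Rightarrow> ('b \<Rightarrow> 'a \<Rightarrow> complex) \<Rightarrow> bool" where
  "orthon S e \<longleftrightarrow> (\<forall>j\<in>S. e j \<in> V) \<and> (\<forall>i\<in>S. \<forall>j\<in>S. ip (e i) (e j) = (if i = j then 1 else 0))"

lemma orthon_subset: "orthon S e \<Longrightarrow> S' \<subseteq> S \<Longrightarrow> orthon S' e"
  unfolding orthon_def by (metis subsetD)

lemma orthon_coeff: assumes "orthon S e" "finite S" "i \<in> S"
  shows "ip (\<lambda>t. \<Sum>j\<in>S. c j * e j t) (e i) = c i"
proof -
  have V: "\<And>j. j \<in> S \<Longrightarrow> e j \<in> V" using assms(1) by (auto simp: orthon_def)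
  have "ip (\<lambda>t. \<Sum>j\<in>S. c j * e j t) (e i) = (\<Sum>j\<in>S. c j * ip (e j) (e i))"
    using assms(2) V V[OF assms(3)] by (rule ip_sum_left)
  also have "\<dots> = (\<Sum>j\<in>S. if j = i then c j else 0)"
  proof (rule sum.cong[OF refl])
    fix j assume "j \<in> S"
    then have "ip (e j) (e i) = (if j = i then 1 else 0)" using assms(1,3) unfolding orthon_def by blast
    then show "c j * ip (e j) (e i) = (if j = i then c j else 0)" by simp
  qed
  also have "\<dots> = c i" using assms(2,3) by (simp add: sum.delta)
  finally show ?thesis .
qed

lemma orthon_norm: assumes "orthon S e" "finite S"
  shows "Re (ip (\<lambda>t. \<Sum>j\<in>S. c j * e j t) (\<lambda>t. \<Sum>j\<in>S. c j * e j t)) = (\<Sum>j\<in>S. (cmod (c j))\<^sup>2)"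
proof -
  have V: "\<And>j. j \<in> S \<Longrightarrow> e j \<in> V" using assms by (auto simp: orthon_def)
  have "ip (\<lambda>t. \<Sum>j\<in>S. c j * e j t) (\<lambda>t. \<Sum>j\<in>S. c j * e j t)
      = (\<Sum>j\<in>S. cnj (c j) * ip (\<lambda>t. \<Sum>j\<in>S. c j * e j t) (e j))"
    using assms V by (intro ip_sum_right V_sum) auto
  also have "\<dots> = (\<Sum>j\<in>S. cnj (c j) * c j)" using assms by (simp add: orthon_coeff)
  moreover have "\<And>c. Re (cnj c * c) = (cmod c)\<^sup>2" by (subst cmod_power2) (simp add: power2_eq_square)
  ultimately show ?thesis by (simp add: Re_sum)
qed

lemma bessel_eq: assumes on: "orthon S e" and fin: "finite S" and x: "x \<in> V"
  shows "Re (ip x x) = Re (ip (\<lambda>t. x t - (\<Sum>j\<in>S. ip x (e j) * e j t)) (\<lambda>t. x t - (\<Sum>j\<in>S. ip x (e j) * e j t)))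
     + (\<Sum>j\<in>S. (cmod (ip x (e j)))\<^sup>2)"
proof -
  define P where "P = (\<lambda>t. \<Sum>j\<in>S. ip x (e j) * e j t)"
  have Ve: "\<And>j. j \<in> S \<Longrightarrow> e j \<in> V" using on by (auto simp: orthon_def)
  have VP: "P \<in> V" unfolding P_def using fin Ve by (rule V_sum)
  have Vy: "(\<lambda>t. x t - P t) \<in> V" using x VP by (rule V_diff)
  have yP: "ip (\<lambda>t. x t - P t) P = 0"
  proof -
    have "ip (\<lambda>t. x t - P t) P = (\<Sum>j\<in>S. cnj (ip x (e j)) * ip (\<lambda>t. x t - P t) (e j))"
      unfolding P_def using fin Ve Vy[unfolded P_def] by (rule ip_sum_right)
    also have "\<dots> = 0"
    proof (rule sum.neutral, intro ballI)
      fix j assume j: "j \<in> S"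
      have "ip (\<lambda>t. x t - P t) (e j) = ip x (e j) - ip P (e j)" using x VP Ve j by (simp add: ip_diff)
      also have "ip P (e j) = ip x (e j)" unfolding P_def using on fin j by (rule orthon_coeff)
      finally show "cnj (ip x (e j)) * ip (\<lambda>t. x t - P t) (e j) = 0" by simp
    qed
    finally show ?thesis .
  qed
  define y where "y = (\<lambda>t. x t - P t)"
  have Vy': "y \<in> V" using Vy by (simp add: y_def)
  have yP': "ip y P = 0" using yP by (simp add: y_def)
  have xeq: "x = (\<lambda>t. y t + P t)" by (simp add: y_def)
  have xs: "ip x x = ip (\<lambda>t. y t + P t) (\<lambda>t. y t + P t)" by (subst (1 2) xeq) (rule refl)
  have Vs: "(\<lambda>t. y t + P t) \<in> V" using Vy' VP by (rule V_add)
  have "ip (\<lambda>t. y t + P t) (\<lambda>t. y t + P t) = ip y (\<lambda>t. y t + P t) + ip P (\<lambda>t. y t + P t)"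
    using Vy' VP Vs by (rule ip_add)
  also have "\<dots> = ip y y + ip y P + (ip P y + ip P P)"
    by (simp only: ip_add_right[OF Vy' VP Vy'] ip_add_right[OF Vy' VP VP])
  finally have e0: "ip (\<lambda>t. y t + P t) (\<lambda>t. y t + P t) = ip y y + ip y P + (ip P y + ip P P)" .
  have e: "ip x x = ip y y + ip y P + (ip P y + ip P P)" using xs e0 by (rule trans)
  have "ip P y = cnj (ip y P)" using Vy' VP by (rule ip_cnj)
  then have Py: "ip P y = 0" using yP' by simp
  have "Re (ip x x) = Re (ip y y) + Re (ip P P)" using e yP' Py by simp
  moreover have "Re (ip P P) = (\<Sum>j\<in>S. (cmod (ip x (e j)))\<^sup>2)" unfolding P_def using on fin by (rule orthon_norm)
  ultimately show ?thesis unfolding y_def P_def by simp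
qed

lemma bessel: assumes on: "orthon S e" and fin: "finite S" and x: "x \<in> V"
  shows "nrm (\<lambda>t. x t - (\<Sum>j\<in>S. ip x (e j) * e j t)) \<le> nrm x"
proof -
  have "(\<Sum>j\<in>S. (cmod (ip x (e j)))\<^sup>2) \<ge> 0" by (intro sum_nonneg) auto
  then show ?thesis unfolding nrm_def using bessel_eq[OF assms] by (intro real_sqrt_le_mono) linarith
qed

lemma bessel_ineq: assumes on: "orthon S e" and fin: "finite S" and x: "x \<in> V"
  shows "(\<Sum>j\<in>S. (cmod (ip x (e j)))\<^sup>2) \<le> Re (ip x x)"
proof -
  have Ve: "\<And>j. j \<in> S \<Longrightarrow> e j \<in> V" using on by (auto simp: orthon_def)
  have "(\<lambda>t. x t - (\<Sum>j\<in>S. ip x (e j) * e j t)) \<in> V" using x fin Ve by (intro V_diff V_sum)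
  then show ?thesis using bessel_eq[OF assms] ip_pos by fastforce
qed
end


lemma legT_cont: "continuous_on A (\<lambda>t. legendre_T T l t)"
proof -
  have "(\<lambda>t. legendre_T T l t) = (\<lambda>t. (sqrt ((2 * real l + 1) / 2) / sqrt T) * poly (lp l) ((1/T) * t))"
    by (simp add: fun_eq_iff legendre_T_def legendre_on_def poly_lp)
  then show ?thesis by (simp only:) (intro continuous_intros)
qed

lemma synth_cont: "continuous_on A (synth N T c)"
  unfolding synth_def[abs_def] by (intro continuous_intros legT_cont continuous_on_of_real)

lemma interp_cont: "continuous_on A (interp N g)"
  unfolding interp_lagr[abs_def] by (intro continuous_intros continuous_on_of_real)

lemma cont_ip_integrable: "continuous_on {-1..1} x \<Longrightarrow> continuous_on {-1..1} z \<Longrightarrow>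
  (\<lambda>t. x t * cnj (z t)) integrable_on {-1..1::real}"
  by (intro integrable_continuous_interval continuous_intros) auto

lemma l2_self: assumes "continuous_on {-1..1} x"
  shows "l2_inner x x = complex_of_real (integral {-1..1} (\<lambda>t. (cmod (x t))\<^sup>2))"
proof -
  have i: "(\<lambda>t. (cmod (x t))\<^sup>2) integrable_on {-1..1::real}"
    using assms by (intro integrable_continuous_interval continuous_intros)
  have "l2_inner x x = integral {-1..1} (\<lambda>t. complex_of_real ((cmod (x t))\<^sup>2))"
    unfolding l2_inner_def by (intro integral_cong) (simp only: complex_norm_square)
  also have "\<dots> = complex_of_real (integral {-1..1} (\<lambda>t. (cmod (x t))\<^sup>2))"
    by (intro integral_unique has_integral_of_real integrable_integral i)
  finally show ?thesis .
qed

lemma L2_sesq: "sesq {h. continuous_on {-1..1} h} l2_inner"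
proof
  fix x y z :: "real \<Rightarrow> complex" and c :: complex
  show "x \<in> {h. continuous_on {-1..1} h} \<Longrightarrow> y \<in> {h. continuous_on {-1..1} h} \<Longrightarrow>
      (\<lambda>t. x t + y t) \<in> {h. continuous_on {-1..1} h}" by (auto intro: continuous_intros)
  show "x \<in> {h. continuous_on {-1..1} h} \<Longrightarrow> (\<lambda>t. c * x t) \<in> {h. continuous_on {-1..1} h}"
    by (auto intro: continuous_intros)
  show "(\<lambda>t. 0) \<in> {h. continuous_on {-1..1} h}" by auto
  show "x \<in> {h. continuous_on {-1..1} h} \<Longrightarrow> y \<in> {h. continuous_on {-1..1} h} \<Longrightarrow> z \<in> {h. continuous_on {-1..1} h} \<Longrightarrow>
      l2_inner (\<lambda>t. x t + y t) z = l2_inner x z + l2_inner y z"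
    unfolding l2_inner_def distrib_right by (intro integral_add cont_ip_integrable) auto
  show "x \<in> {h. continuous_on {-1..1} h} \<Longrightarrow> z \<in> {h. continuous_on {-1..1} h} \<Longrightarrow>
      l2_inner (\<lambda>t. c * x t) z = c * l2_inner x z"
    unfolding l2_inner_def by (simp add: mult.assoc)
  show "x \<in> {h. continuous_on {-1..1} h} \<Longrightarrow> y \<in> {h. continuous_on {-1..1} h} \<Longrightarrow>
      l2_inner y x = cnj (l2_inner x y)"
    unfolding l2_inner_def integral_cnj by (simp add: mult.commute)
  show "x \<in> {h. continuous_on {-1..1} h} \<Longrightarrow> 0 \<le> Re (l2_inner x x)"
    by (simp add: l2_self integral_nonneg integrable_continuous_interval continuous_intros)
qed

interpretation L2: sesq "{h. continuous_on {-1..1} h}" l2_inner by (rule L2_sesq)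

lemma l2_norm_nrm: "continuous_on {-1..1} x \<Longrightarrow> l2_norm x = L2.nrm x"
  by (simp add: l2_norm_def L2.nrm_def l2_self)

lemma l2_inner_cong: "(\<And>t. t \<in> {-1..1} \<Longrightarrow> x t = x' t) \<Longrightarrow> l2_inner x z = l2_inner x' z"
  unfolding l2_inner_def by (intro integral_cong) auto

lemma l2_norm_cong: assumes "\<And>t. t \<in> {-1..1} \<Longrightarrow> x t = x' t" shows "l2_norm x = l2_norm x'"
proof -
  have "integral {-1..1} (\<lambda>t. (cmod (x t))\<^sup>2) = integral {-1..1} (\<lambda>t. (cmod (x' t))\<^sup>2)"
    by (intro integral_cong) (simp add: assms)
  then show ?thesis by (simp add: l2_norm_def)
qed

lemma vin_sesq: "sesq UNIV (vinner N)"
proof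
  fix x y z :: "nat \<Rightarrow> complex" and c :: complex
  show "(\<lambda>t. x t + y t) \<in> UNIV" "(\<lambda>t. c * x t) \<in> UNIV" "(\<lambda>t. 0) \<in> UNIV" by auto
  show "vinner N (\<lambda>t. x t + y t) z = vinner N x z + vinner N y z"
    by (simp add: vinner_def distrib_right sum.distrib)
  show "vinner N (\<lambda>t. c * x t) z = c * vinner N x z"
    by (simp add: vinner_def sum_distrib_left mult.assoc)
  show "vinner N y x = cnj (vinner N x y)"
    by (simp add: vinner_def cnj_sum mult.commute)
  have "Re (vinner N x x) = (\<Sum>l\<le>N. (cmod (x l))\<^sup>2)"
    by (simp add: vinner_def Re_sum complex_norm_square[symmetric] del: Re_complex_of_real) (simp add: Re_complex_of_real)
  then show "0 \<le> Re (vinner N x x)" by (simp add: sum_nonneg)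
qed

lemma vin_self: "Re (vinner N x x) = (vnorm N x)\<^sup>2"
proof -
  have "Re (vinner N x x) = (\<Sum>l\<le>N. (cmod (x l))\<^sup>2)"
    by (simp add: vinner_def Re_sum complex_norm_square[symmetric] del: Re_complex_of_real) (simp add: Re_complex_of_real)
  then show ?thesis by (simp add: vnorm_def sum_nonneg)
qed


lemma tsvd_bound:
  fixes g p :: "real \<Rightarrow> complex" and c :: "nat \<Rightarrow> complex"
  assumes svd: "is_svd N T r \<sigma> v u" and eps: "eps > 0"
    and gc: "continuous_on {-1..1} g"
    and pc: "\<And>t. t \<in> {-1..1} \<Longrightarrow> p t = synth N T c t"
  shows "l2_norm (\<lambda>t. g t - tsvd N T eps r \<sigma> v u g t) \<le> l2_norm (\<lambda>t. g t - p t) + eps * vnorm N c"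
proof -
  interpret CV: sesq UNIV "vinner N" by (rule vin_sesq)
  have sig: "\<And>j. j < r \<Longrightarrow> \<sigma> j > 0"
    and von: "\<And>i j. i < r \<Longrightarrow> j < r \<Longrightarrow> vinner N (v i) (v j) = (if i = j then 1 else 0)"
    and uon: "\<And>i j. i < r \<Longrightarrow> j < r \<Longrightarrow> l2_inner (u i) (u j) = (if i = j then 1 else 0)"
    and syn: "\<And>c t. t \<in> {-1..1} \<Longrightarrow> synth N T c t = (\<Sum>j<r. complex_of_real (\<sigma> j) * vinner N c (v j) * u j t)"
    using svd unfolding is_svd_def by auto
  define R where "R = {..<r}"
  define S where "S = {j. j < r \<and> \<sigma> j > eps}"
  have fR: "finite R" and SR: "S \<subseteq> R" and fS: "finite S" by (auto simp: R_def S_def)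
  have sv: "synth N T (v i) t = complex_of_real (\<sigma> i) * u i t" if i: "i < r" and t: "t \<in> {-1..1}" for i t
  proof -
    have "synth N T (v i) t = (\<Sum>j<r. if j = i then complex_of_real (\<sigma> j) * u j t else 0)"
      unfolding syn[OF t] by (intro sum.cong refl) (simp add: von i)
    also have "\<dots> = complex_of_real (\<sigma> i) * u i t" using i by (simp add: sum.delta')
    finally show ?thesis .
  qed
  have uc: "continuous_on {-1..1} (u i)" if i: "i < r" for i
  proof (rule continuous_on_eq)
    show "continuous_on {-1..1} (\<lambda>t. synth N T (v i) t / complex_of_real (\<sigma> i))"
      by (intro continuous_intros synth_cont) (use sig[OF i] in simp)
    show "synth N T (v i) t / complex_of_real (\<sigma> i) = u i t" if "t \<in> {-1..1}" for t
      using sv[OF i that] sig[OF i] by simp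
  qed
  have onR: "L2.orthon R u" unfolding L2.orthon_def R_def using uc uon by auto
  have von': "CV.orthon R v" unfolding CV.orthon_def R_def using von by auto
  have ts: "tsvd N T eps r \<sigma> v u g t = (\<Sum>j\<in>S. l2_inner g (u j) * u j t)" if t: "t \<in> {-1..1}" for t
    unfolding tsvd_def S_def[symmetric]
  proof (intro sum.cong refl)
    fix j assume "j \<in> S"
    then have j: "j < r" by (simp add: S_def)
    show "complex_of_real (1 / \<sigma> j) * l2_inner g (u j) * synth N T (v j) t = l2_inner g (u j) * u j t"
      using sv[OF j t] sig[OF j] by (simp add: field_simps)
  qed
  have pcont: "continuous_on {-1..1} p"
    by (rule continuous_on_eq[OF synth_cont]) (simp add: pc)
  define d where "d = (\<lambda>t. g t - p t)"
  have dc: "continuous_on {-1..1} d" unfolding d_def using gc pcont by (intro continuous_intros)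
  define \<beta> where "\<beta> j = complex_of_real (\<sigma> j) * vinner N c (v j)" for j
  define pp where "pp = (\<lambda>t. \<Sum>j\<in>R. \<beta> j * u j t)"
  have ppc: "continuous_on {-1..1} pp"
    unfolding pp_def using uc by (intro continuous_intros) (auto simp: R_def)
  have ppe: "p t = pp t" if "t \<in> {-1..1}" for t
    unfolding pc[OF that] syn[OF that] pp_def R_def \<beta>_def by simp
  have ipg: "l2_inner g (u j) = l2_inner d (u j) + \<beta> j" if j: "j \<in> R" for j
  proof -
    have ucj: "continuous_on {-1..1} (u j)" using j uc by (simp add: R_def)
    have "l2_inner g (u j) = l2_inner (\<lambda>t. d t + pp t) (u j)"
      by (rule l2_inner_cong) (simp add: d_def ppe)
    also have "\<dots> = l2_inner d (u j) + l2_inner pp (u j)"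
      using dc ppc ucj by (intro L2.ip_add) auto
    also have "l2_inner pp (u j) = \<beta> j" unfolding pp_def using onR fR j by (rule L2.orthon_coeff)
    finally show ?thesis .
  qed
  define Pd where "Pd = (\<lambda>t. d t - (\<Sum>j\<in>S. l2_inner d (u j) * u j t))"
  define q where "q = (\<lambda>t. \<Sum>j\<in>R - S. \<beta> j * u j t)"
  have Pdc: "continuous_on {-1..1} Pd" unfolding Pd_def using dc uc SR
    by (intro continuous_intros) (auto simp: R_def)
  have qc: "continuous_on {-1..1} q" unfolding q_def using uc
    by (intro continuous_intros) (auto simp: R_def)
  have eq: "g t - tsvd N T eps r \<sigma> v u g t = Pd t + q t" if t: "t \<in> {-1..1}" for t
  proof -
    have "(\<Sum>j\<in>S. l2_inner g (u j) * u j t) = (\<Sum>j\<in>S. l2_inner d (u j) * u j t + \<beta> j * u j t)"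
    proof (rule sum.cong[OF refl])
      fix j assume "j \<in> S"
      then have "j \<in> R" using SR by blast
      then show "l2_inner g (u j) * u j t = l2_inner d (u j) * u j t + \<beta> j * u j t"
        by (simp only: ipg distrib_right)
    qed
    also have "\<dots> = (\<Sum>j\<in>S. l2_inner d (u j) * u j t) + (\<Sum>j\<in>S. \<beta> j * u j t)"
      by (rule sum.distrib)
    moreover have "q t = pp t - (\<Sum>j\<in>S. \<beta> j * u j t)"
      unfolding q_def pp_def using fR SR by (rule sum_diff)
    moreover have "g t = d t + pp t" using ppe[OF t] by (simp add: d_def)
    ultimately show ?thesis unfolding ts[OF t] Pd_def by (simp only: diff_add_eq add_diff_eq diff_diff_eq)
  qed
  have "l2_norm (\<lambda>t. g t - tsvd N T eps r \<sigma> v u g t) = l2_norm (\<lambda>t. Pd t + q t)"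
    by (rule l2_norm_cong) (rule eq)
  also have "\<dots> = L2.nrm (\<lambda>t. Pd t + q t)" using Pdc qc by (intro l2_norm_nrm continuous_intros)
  also have "\<dots> \<le> L2.nrm Pd + L2.nrm q" using Pdc qc by (intro L2.nrm_triangle) auto
  also have "L2.nrm Pd \<le> L2.nrm d"
    unfolding Pd_def using L2.orthon_subset[OF onR SR] fS dc by (intro L2.bessel) auto
  also have "L2.nrm d = l2_norm (\<lambda>t. g t - p t)" using dc by (simp add: l2_norm_nrm d_def)
  also have "L2.nrm q \<le> eps * vnorm N c"
  proof -
    have onRS: "L2.orthon (R - S) u" using onR by (rule L2.orthon_subset) auto
    have "(L2.nrm q)\<^sup>2 = Re (l2_inner q q)" using qc by (intro L2.nrm_sq) auto
    also have "\<dots> = (\<Sum>j\<in>R - S. (cmod (\<beta> j))\<^sup>2)" unfolding q_def using onRS fR by (intro L2.orthon_norm) auto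
    also have "\<dots> \<le> (\<Sum>j\<in>R - S. eps\<^sup>2 * (cmod (vinner N c (v j)))\<^sup>2)"
    proof (rule sum_mono)
      fix j assume j: "j \<in> R - S"
      then have "0 < \<sigma> j" "\<sigma> j \<le> eps" using sig by (auto simp: R_def S_def)
      then have "(\<sigma> j)\<^sup>2 \<le> eps\<^sup>2" by (intro power_mono) auto
      moreover have "(cmod (\<beta> j))\<^sup>2 = (\<sigma> j)\<^sup>2 * (cmod (vinner N c (v j)))\<^sup>2"
        unfolding \<beta>_def norm_mult power_mult_distrib norm_of_real power2_abs ..
      ultimately show "(cmod (\<beta> j))\<^sup>2 \<le> eps\<^sup>2 * (cmod (vinner N c (v j)))\<^sup>2"
        by (simp only:) (rule mult_right_mono, auto)
    qed
    also have "\<dots> = eps\<^sup>2 * (\<Sum>j\<in>R - S. (cmod (vinner N c (v j)))\<^sup>2)" by (simp add: sum_distrib_left)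
    also have "\<dots> \<le> eps\<^sup>2 * (\<Sum>j\<in>R. (cmod (vinner N c (v j)))\<^sup>2)"
      using fR by (intro mult_left_mono sum_mono2) auto
    also have "\<dots> \<le> eps\<^sup>2 * Re (vinner N c c)"
      using von' fR by (intro mult_left_mono CV.bessel_ineq) auto
    also have "\<dots> = (eps * vnorm N c)\<^sup>2" unfolding vin_self power_mult_distrib ..
    finally have sq: "(L2.nrm q)\<^sup>2 \<le> (eps * vnorm N c)\<^sup>2" .
    have "vnorm N c \<ge> 0" unfolding vnorm_def by (intro real_sqrt_ge_zero sum_nonneg) simp
    then have "0 \<le> eps * vnorm N c" using eps by simp
    then show ?thesis using sq by (rule power2_le_imp_le[rotated])
  qed
  finally show ?thesis by simp
qed


lemma local_interp_bound:
  fixes Df :: "nat \<Rightarrow> real \<Rightarrow> complex" and c s lo hi Cf :: real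
  assumes N: "N \<ge> 1" and s: "s > 0"
    and sub: "lo \<le> c - s" "c + s \<le> hi"
    and Dder: "\<And>m x. m \<le> N \<Longrightarrow> x \<in> {lo..hi} \<Longrightarrow> (Df m has_vector_derivative Df (Suc m) x) (at x within {lo..hi})"
    and Dbound: "\<And>x. x \<in> {lo<..<hi} \<Longrightarrow> cmod (Df (Suc N) x) \<le> Cf"
  shows "continuous_on {-1..1} (\<lambda>t. Df 0 (c + s * t))"
    and "\<And>t. t \<in> {-1..1} \<Longrightarrow> cmod (Df 0 (c + s * t) - interp N (\<lambda>t. Df 0 (c + s * t)) t) \<le> (2 * s / real N) ^ Suc N * Cf"
proof -
  define G where "G m x = complex_of_real (s ^ m) * Df m (c + s * x)" for m x
  have G0: "G 0 = (\<lambda>t. Df 0 (c + s * t))" by (simp add: G_def fun_eq_iff)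
  have img: "(\<lambda>x. c + s * x) ` {-1..1} \<subseteq> {lo..hi}"
  proof
    fix y assume "y \<in> (\<lambda>x. c + s * x) ` {-1..1}"
    then obtain x where x: "x \<in> {-1..1}" "y = c + s * x" by auto
    have "s * x \<le> s * 1" "s * (-1) \<le> s * x" using x s by (intro mult_left_mono; simp)+
    then show "y \<in> {lo..hi}" using x sub by auto
  qed
  have der: "(G m has_vector_derivative G (Suc m) x) (at x within {-1..1})"
    if m: "m \<le> N" and x: "x \<in> {-1..1}" for m x
  proof -
    have aff: "((\<lambda>x. c + s * x) has_vector_derivative s) (at x within {-1..1})"
      unfolding has_real_derivative_iff_has_vector_derivative[symmetric]
      by (auto intro!: derivative_eq_intros)
    have "c + s * x \<in> (\<lambda>x. c + s * x) ` {-1..1}" using x by blast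
    then have xi: "c + s * x \<in> {lo..hi}" using img by blast
    have "(Df m has_vector_derivative Df (Suc m) (c + s * x)) (at (c + s * x) within (\<lambda>x. c + s * x) ` {-1..1})"
      using Dder[OF m xi] img by (rule has_vector_derivative_within_subset)
    from vector_diff_chain_within[OF aff this]
    have "((\<lambda>x. Df m (c + s * x)) has_vector_derivative (s *\<^sub>R Df (Suc m) (c + s * x))) (at x within {-1..1})"
      by (simp add: o_def)
    then have "((\<lambda>x. complex_of_real (s ^ m) * Df m (c + s * x)) has_vector_derivative
        complex_of_real (s ^ m) * (s *\<^sub>R Df (Suc m) (c + s * x))) (at x within {-1..1})"
      by (rule has_vector_derivative_mult_right)
    then show ?thesis
      unfolding G_def[abs_def] by (rule has_vector_derivative_eq_rhs) (simp add: scaleR_conv_of_real)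
  qed
  have bnd: "cmod (G (Suc N) x) \<le> s ^ Suc N * Cf" if x: "x \<in> {-1<..<1}" for x
  proof -
    have "s * x < s * 1" "s * (-1) < s * x" using x s by (intro mult_strict_left_mono; simp)+
    then have "c + s * x \<in> {lo<..<hi}" using sub by auto
    then have "cmod (Df (Suc N) (c + s * x)) \<le> Cf" by (rule Dbound)
    then show ?thesis using s by (simp add: G_def norm_mult abs_of_pos mult_left_mono del: of_real_power)
  qed
  show "continuous_on {-1..1} (\<lambda>t. Df 0 (c + s * t))"
    unfolding G0[symmetric] by (rule continuous_on_vector_derivative) (rule der, auto)
  fix t :: real assume t: "t \<in> {-1..1}"
  have "cmod (G 0 t - interp N (G 0) t) \<le> (2 / real N) ^ Suc N * (s ^ Suc N * Cf)"
    using N der bnd t by (rule interp_err)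
  also have "\<dots> = (2 * s / real N) ^ Suc N * Cf" by (simp add: power_mult_distrib power_divide)
  finally show "cmod (Df 0 (c + s * t) - interp N (\<lambda>t. Df 0 (c + s * t)) t) \<le> (2 * s / real N) ^ Suc N * Cf"
    unfolding G0 .
qed

lemma l2_from_sup:
  assumes hc: "continuous_on {-1..1} h" and hb: "\<And>t. t \<in> {-1..1} \<Longrightarrow> cmod (h t) \<le> b"
  shows "l2_norm h \<le> sqrt 2 * b"
proof -
  have "cmod (h 0) \<le> b" by (rule hb) simp
  then have b0: "b \<ge> 0" using norm_ge_zero[of "h 0"] by linarith
  have "integral {-1..1} (\<lambda>t. (cmod (h t))\<^sup>2) \<le> integral {-1..1} (\<lambda>t::real. b\<^sup>2)"
    using hc hb by (intro integral_le integrable_continuous_interval continuous_intros power_mono) auto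
  also have "\<dots> = 2 * b\<^sup>2" by simp
  finally have "l2_norm h \<le> sqrt (2 * b\<^sup>2)" unfolding l2_norm_def by (rule real_sqrt_le_mono)
  also have "\<dots> = sqrt 2 * b" using b0 by (simp add: real_sqrt_mult)
  finally show ?thesis .
qed

lemma tsvd_cont: "continuous_on A (tsvd N T eps r \<sigma> v u g)"
  unfolding tsvd_def[abs_def] by (intro continuous_intros synth_cont)


lemma affine_integral:
  fixes \<phi> :: "real \<Rightarrow> real" and J c s :: real
  assumes phi: "(\<phi> has_integral J) {-1..1}" and s: "s > 0"
  shows "((\<lambda>x. \<phi> ((x - c) / s)) has_integral (s * J)) {c - s..c + s}"
proof -
  have "((\<lambda>x. \<phi> ((1 / s) *\<^sub>R x + - (c / s))) has_integral (1 / \<bar>1 / s\<bar> ^ DIM(real)) *\<^sub>R J)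
     ((\<lambda>x. (1 / (1 / s)) *\<^sub>R x + - ((1 / (1 / s)) *\<^sub>R (- (c / s)))) ` cbox (-1) 1)"
    using phi s by (intro has_integral_affinity) (auto simp: cbox_interval)
  moreover have "(\<lambda>x. (1 / (1 / s)) *\<^sub>R x + - ((1 / (1 / s)) *\<^sub>R (- (c / s)))) ` cbox (-1) 1 = {c - s..c + s}"
  proof -
    have "(\<lambda>x. (1 / (1 / s)) *\<^sub>R x + - ((1 / (1 / s)) *\<^sub>R (- (c / s)))) = (\<lambda>x. s * x + c)"
      using s by (auto simp: fun_eq_iff)
    then show ?thesis using s by (simp add: cbox_interval image_affinity_atLeastAtMost)
  qed
  moreover have "(\<lambda>x. \<phi> ((1 / s) *\<^sub>R x + - (c / s))) = (\<lambda>x. \<phi> ((x - c) / s))"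
    by (auto simp: fun_eq_iff diff_divide_distrib)
  moreover have "(1 / \<bar>1 / s\<bar> ^ DIM(real)) *\<^sub>R J = s * J" using s by simp
  ultimately show ?thesis using s by (simp add: abs_of_pos)
qed

lemma least_k:
  fixes a :: "nat \<Rightarrow> real"
  assumes as: "\<forall>i<K. a i < a (Suc i)" and k: "1 \<le> k" "k \<le> K" and x: "a (k - 1) < x" "x \<le> a k"
  shows "(LEAST k'. 1 \<le> k' \<and> x \<le> a k') = k"
proof (rule Least_equality)
  show "1 \<le> k \<and> x \<le> a k" using k x by simp
  fix y assume y: "1 \<le> y \<and> x \<le> a y"
  show "k \<le> y"
  proof (rule ccontr)
    assume "\<not> k \<le> y"
    then have "y \<le> k - 1" "k - 1 \<le> K" using k by auto
    then have "a y \<le> a (k - 1)" using zmono_le[OF as] by blast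
    then show False using x y by simp
  qed
qed

theorem corollary2p3:
  fixes N K r :: nat and T eps Cf :: real
    and a :: "nat \<Rightarrow> real"
    and f :: "real \<Rightarrow> complex" and Df :: "nat \<Rightarrow> real \<Rightarrow> complex"
    and \<sigma> :: "nat \<Rightarrow> real" and v :: "nat \<Rightarrow> nat \<Rightarrow> complex" and u :: "nat \<Rightarrow> real \<Rightarrow> complex"
  assumes N: "N \<ge> 1" and K: "K \<ge> 1" and T: "T > 1" and eps: "eps > 0"
    and part: "\<And>k. 1 \<le> k \<Longrightarrow> k \<le> K \<Longrightarrow> a (k - 1) < a k"
    and D0: "Df 0 = f"
    and Dder: "\<And>m x. m \<le> N \<Longrightarrow> x \<in> {a 0..a K} \<Longrightarrow>
                 (Df m has_vector_derivative Df (Suc m) x) (at x within {a 0..a K})"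
    and Dcont: "continuous_on {a 0..a K} (Df (Suc N))"
    and Dbound: "\<And>x. x \<in> {a 0<..<a K} \<Longrightarrow> norm (Df (Suc N) x) \<le> Cf"
    and svd: "is_svd N T r \<sigma> v u"
  shows "\<exists>cint :: nat \<Rightarrow> nat \<Rightarrow> complex.
     (\<forall>k\<in>{1..K}.
        (\<forall>t\<in>{-1..1}. interp N (loc f a k) t = synth N T (cint k) t) \<and>
        l2_norm (\<lambda>t. loc f a k t - tsvd N T eps r \<sigma> v u (loc f a k) t)
          \<le> l2_norm (\<lambda>t. loc f a k t - interp N (loc f a k) t) + eps * vnorm N (cint k) \<and>
        l2_norm (\<lambda>t. loc f a k t - interp N (loc f a k) t) + eps * vnorm N (cint k)
          \<le> sqrt 2 * (Max ((\<lambda>k. a k - a (k - 1)) ` {1..K})) ^ (N + 1) / real N ^ (N + 1) * Cf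
             + eps * vnorm N (cint k)) \<and>
     integral {a 0..a K} (\<lambda>x. (cmod (f x - piecewise_approx N T eps r \<sigma> v u f a x))\<^sup>2)
       \<le> (\<Sum>k=1..K. half a k *
            (sqrt 2 * (Max ((\<lambda>k. a k - a (k - 1)) ` {1..K})) ^ (N + 1) / real N ^ (N + 1) * Cf
             + eps * vnorm N (cint k))\<^sup>2)"
proof -
  define hmax where "hmax = Max ((\<lambda>k. a k - a (k - 1)) ` {1..K})"
  define Bs where "Bs = sqrt 2 * hmax ^ (N + 1) / real N ^ (N + 1) * Cf"
  have T0: "T > 0" using T by simp
  have as: "\<forall>i<K. a i < a (Suc i)"
  proof (intro allI impI)
    fix i assume "i < K"
    then show "a i < a (Suc i)" using part[of "Suc i"] by simp
  qed
  have aK: "a 0 < a K" using zmono_lt[OF as, of 0 K] K by simp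
  have "cmod (Df (Suc N) ((a 0 + a K) / 2)) \<le> Cf" by (rule Dbound) (use aK in auto)
  then have Cf0: "Cf \<ge> 0" using norm_ge_zero[of "Df (Suc N) ((a 0 + a K) / 2)"] by linarith
  have "\<forall>k. \<exists>c. \<forall>t. interp N (loc f a k) t = synth N T c t" using interp_synth[OF T0] by blast
  then obtain cint where cint: "\<And>k t. interp N (loc f a k) t = synth N T (cint k) t" by metis
  define Q where "Q k = tsvd N T eps r \<sigma> v u (loc f a k)" for k
  define J where "J k = integral {-1..1} (\<lambda>t. (cmod (loc f a k t - Q k t))\<^sup>2)" for k
  have loc1: "\<And>k. k \<in> {1..K} \<Longrightarrow>
     continuous_on {-1..1} (loc f a k) \<and>
     l2_norm (\<lambda>t. loc f a k t - tsvd N T eps r \<sigma> v u (loc f a k) t)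
          \<le> l2_norm (\<lambda>t. loc f a k t - interp N (loc f a k) t) + eps * vnorm N (cint k) \<and>
     l2_norm (\<lambda>t. loc f a k t - interp N (loc f a k) t) \<le> Bs"
  proof -
    fix k assume k: "k \<in> {1..K}"
    have s: "half a k > 0" using part[of k] k by (simp add: half_def)
    have mh: "mid a k - half a k = a (k - 1)" "mid a k + half a k = a k" by (simp_all add: mid_def half_def field_simps)
    have lo: "a 0 \<le> mid a k - half a k" unfolding mh using k by (intro zmono_le[OF as]) auto
    have hi: "mid a k + half a k \<le> a K" unfolding mh using k by (intro zmono_le[OF as]) auto
    have gk: "loc f a k = (\<lambda>t. Df 0 (mid a k + half a k * t))" by (simp add: loc_def D0 fun_eq_iff)
    have gc: "continuous_on {-1..1} (loc f a k)" unfolding gk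
      using N s lo hi Dder Dbound by (rule local_interp_bound(1))
    have "2 * half a k = a k - a (k - 1)" by (simp add: half_def)
    also have "\<dots> \<le> hmax" unfolding hmax_def using k by (intro Max_ge) auto
    finally have hk: "2 * half a k \<le> hmax" .
    have err: "cmod (loc f a k t - interp N (loc f a k) t) \<le> hmax ^ (N + 1) / real N ^ (N + 1) * Cf"
      if t: "t \<in> {-1..1}" for t
    proof -
      have "cmod (loc f a k t - interp N (loc f a k) t) \<le> (2 * half a k / real N) ^ Suc N * Cf"
        unfolding gk using N s lo hi Dder Dbound t by (rule local_interp_bound(2))
      also have "\<dots> \<le> (hmax / real N) ^ Suc N * Cf"
        using hk s N Cf0 by (intro mult_right_mono power_mono divide_right_mono) auto
      also have "\<dots> = hmax ^ (N + 1) / real N ^ (N + 1) * Cf" by (simp add: power_divide)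
      finally show ?thesis .
    qed
    have "l2_norm (\<lambda>t. loc f a k t - interp N (loc f a k) t) \<le> sqrt 2 * (hmax ^ (N + 1) / real N ^ (N + 1) * Cf)"
      using gc err by (intro l2_from_sup continuous_intros interp_cont)
    also have "\<dots> = Bs" by (simp add: Bs_def)
    finally have l2b: "l2_norm (\<lambda>t. loc f a k t - interp N (loc f a k) t) \<le> Bs" .
    have tb: "l2_norm (\<lambda>t. loc f a k t - tsvd N T eps r \<sigma> v u (loc f a k) t)
          \<le> l2_norm (\<lambda>t. loc f a k t - interp N (loc f a k) t) + eps * vnorm N (cint k)"
      using svd eps gc cint by (rule tsvd_bound)
    show "continuous_on {-1..1} (loc f a k) \<and>
     l2_norm (\<lambda>t. loc f a k t - tsvd N T eps r \<sigma> v u (loc f a k) t)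
          \<le> l2_norm (\<lambda>t. loc f a k t - interp N (loc f a k) t) + eps * vnorm N (cint k) \<and>
     l2_norm (\<lambda>t. loc f a k t - interp N (loc f a k) t) \<le> Bs" using gc tb l2b by blast
  qed
  have piece: "((\<lambda>x. (cmod (f x - piecewise_approx N T eps r \<sigma> v u f a x))\<^sup>2) has_integral (half a k * J k)) {a (k - 1)..a k}"
    if k: "k \<in> {1..K}" for k
  proof -
    have s: "half a k > 0" using part[of k] k by (simp add: half_def)
    have gc: "continuous_on {-1..1} (loc f a k)" using loc1[OF k] by blast
    have mh: "mid a k - half a k = a (k - 1)" "mid a k + half a k = a k" by (simp_all add: mid_def half_def field_simps)
    have phic: "continuous_on {-1..1} (\<lambda>t. (cmod (loc f a k t - Q k t))\<^sup>2)"
      unfolding Q_def using gc by (intro continuous_intros tsvd_cont)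
    have "((\<lambda>t. (cmod (loc f a k t - Q k t))\<^sup>2) has_integral J k) {-1..1}"
      unfolding J_def using phic by (intro integrable_integral integrable_continuous_interval)
    from affine_integral[OF this s, of "mid a k"]
    have aff: "((\<lambda>x. (cmod (loc f a k ((x - mid a k) / half a k) - Q k ((x - mid a k) / half a k)))\<^sup>2) has_integral half a k * J k)
       {a (k - 1)..a k}" by (simp only: mh)
    show ?thesis
    proof (rule has_integral_spike_finite[OF _ _ aff])
      show "finite {a (k - 1)}" by simp
      fix x assume x: "x \<in> {a (k - 1)..a k} - {a (k - 1)}"
      then have x': "a (k - 1) < x" "x \<le> a k" by auto
      have L: "(LEAST k'. 1 \<le> k' \<and> x \<le> a k') = k" using k x' by (intro least_k[OF as]) auto
      have fx: "f x = loc f a k ((x - mid a k) / half a k)" using s by (simp add: loc_def)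
      show "(cmod (f x - piecewise_approx N T eps r \<sigma> v u f a x))\<^sup>2 =
        (cmod (loc f a k ((x - mid a k) / half a k) - Q k ((x - mid a k) / half a k)))\<^sup>2"
        unfolding piecewise_approx_def Let_def L Q_def fx ..
    qed
  qed
  have comb: "((\<lambda>x. (cmod (f x - piecewise_approx N T eps r \<sigma> v u f a x))\<^sup>2) has_integral (\<Sum>k=1..m. half a k * J k)) {a 0..a m}"
    if "m \<le> K" for m
    using that
  proof (induction m)
    case 0
    have "{a 0..a 0} = {a 0}" by simp
    then show ?case by (simp add: has_integral_refl(2))
  next
    case (Suc m)
    have "((\<lambda>x. (cmod (f x - piecewise_approx N T eps r \<sigma> v u f a x))\<^sup>2) has_integral
       ((\<Sum>k=1..m. half a k * J k) + half a (Suc m) * J (Suc m))) {a 0..a (Suc m)}"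
    proof (rule has_integral_combine)
      show "a 0 \<le> a m" "a m \<le> a (Suc m)" using zmono_le[OF as, of 0 m] zmono_le[OF as, of m "Suc m"] Suc.prems by auto
      show "((\<lambda>x. (cmod (f x - piecewise_approx N T eps r \<sigma> v u f a x))\<^sup>2) has_integral (\<Sum>k=1..m. half a k * J k)) {a 0..a m}"
        using Suc by simp
      show "((\<lambda>x. (cmod (f x - piecewise_approx N T eps r \<sigma> v u f a x))\<^sup>2) has_integral half a (Suc m) * J (Suc m)) {a m..a (Suc m)}"
        using piece[of "Suc m"] Suc.prems by simp
    qed
    then show ?case by simp
  qed
  have Jb: "half a k * J k \<le> half a k * (Bs + eps * vnorm N (cint k))\<^sup>2" if k: "k \<in> {1..K}" for k
  proof -
    have s: "half a k > 0" using part[of k] k by (simp add: half_def)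
    have J0: "J k \<ge> 0" unfolding J_def
      using loc1[OF k] by (intro integral_nonneg integrable_continuous_interval continuous_intros tsvd_cont) (auto simp: Q_def intro: tsvd_cont)
    have "l2_norm (\<lambda>t. loc f a k t - Q k t) = sqrt (J k)" by (simp add: l2_norm_def J_def)
    then have "sqrt (J k) \<le> Bs + eps * vnorm N (cint k)" using loc1[OF k] by (simp add: Q_def)
    then have "(sqrt (J k))\<^sup>2 \<le> (Bs + eps * vnorm N (cint k))\<^sup>2" using J0 by (intro power_mono) auto
    then have "J k \<le> (Bs + eps * vnorm N (cint k))\<^sup>2" using J0 by simp
    then show ?thesis using s by (intro mult_left_mono) auto
  qed
  show ?thesis
  proof (intro exI[of _ cint] conjI ballI)
    fix k t assume "k \<in> {1..K}" "t \<in> {-1..1::real}"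
    show "interp N (loc f a k) t = synth N T (cint k) t" by (rule cint)
  next
    fix k assume k: "k \<in> {1..K}"
    show "l2_norm (\<lambda>t. loc f a k t - tsvd N T eps r \<sigma> v u (loc f a k) t)
          \<le> l2_norm (\<lambda>t. loc f a k t - interp N (loc f a k) t) + eps * vnorm N (cint k)" using loc1[OF k] by blast
  next
    fix k assume k: "k \<in> {1..K}"
    show "l2_norm (\<lambda>t. loc f a k t - interp N (loc f a k) t) + eps * vnorm N (cint k)
          \<le> sqrt 2 * (Max ((\<lambda>k. a k - a (k - 1)) ` {1..K})) ^ (N + 1) / real N ^ (N + 1) * Cf + eps * vnorm N (cint k)"
      using loc1[OF k] by (simp add: Bs_def hmax_def)
  next
    have "integral {a 0..a K} (\<lambda>x. (cmod (f x - piecewise_approx N T eps r \<sigma> v u f a x))\<^sup>2) = (\<Sum>k=1..K. half a k * J k)"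
      using comb[of K] by (simp add: integral_unique)
    also have "\<dots> \<le> (\<Sum>k=1..K. half a k * (Bs + eps * vnorm N (cint k))\<^sup>2)" by (intro sum_mono Jb)
    finally show "integral {a 0..a K} (\<lambda>x. (cmod (f x - piecewise_approx N T eps r \<sigma> v u f a x))\<^sup>2)
       \<le> (\<Sum>k=1..K. half a k * (sqrt 2 * (Max ((\<lambda>k. a k - a (k - 1)) ` {1..K})) ^ (N + 1) / real N ^ (N + 1) * Cf
             + eps * vnorm N (cint k))\<^sup>2)" by (simp add: Bs_def hmax_def)
  qed
qed

end
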